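(* Let $n,k$ be integers with $2\le k\le n/2$. For every Gutkin $(n,k)$-gon, the contact angle equals $\pi(k-1)/n$.
   Context: Let $P$ be a convex $n$-gon in the Euclidean plane with vertices $v_0,\dots,v_{n-1}$ in their cyclic (counterclockwise) order, indices taken modulo $n$. $P$ is a Gutkin $(n,k)$-gon if there exists an angle $\alpha$ (the contact angle) such that for every $i$, $\angle v_{i+1}v_iv_{i+k}=\angle v_{i+k-1}v_{i+k}v_i=\alpha$, where $\angle abc$ denotes the angle at $b$ between the segments $ba$ and $bc$. *)

theory Defs
  imports "HOL-Analysis.Analysis"
begin

definition angle_at :: "complex \<Rightarrow> complex \<Rightarrow> complex \<Rightarrow> real" where
  "angle_at a b c = arccos (((a - b) \<bullet> (c - b)) / (norm (a - b) * norm (c - b)))"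

text \<open>Cross product of plane vectors: positive iff y is counterclockwise from x.\<close>
definition cross :: "complex \<Rightarrow> complex \<Rightarrow> real" where
  "cross x y = Im (cnj x * y)"

definition convex_ccw_polygon :: "nat \<Rightarrow> (nat \<Rightarrow> complex) \<Rightarrow> bool" where
  "convex_ccw_polygon n v \<longleftrightarrow> n \<ge> 3 \<and>
     (\<forall>i<n. \<forall>j<n. j \<noteq> i \<and> j \<noteq> (i + 1) mod n \<longrightarrow>
        cross (v ((i + 1) mod n) - v i) (v j - v i) > 0)"

definition gutkin_with_angle :: "nat \<Rightarrow> nat \<Rightarrow> (nat \<Rightarrow> complex) \<Rightarrow> real \<Rightarrow> bool" where
  "gutkin_with_angle n k v \<alpha> \<longleftrightarrow> convex_ccw_polygon n v \<and>
     (\<forall>i<n. angle_at (v ((i + 1) mod n)) (v i) (v ((i + k) mod n)) = \<alpha> \<and>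
            angle_at (v ((i + k - 1) mod n)) (v ((i + k) mod n)) (v i) = \<alpha>)"

definition gutkin_polygon :: "nat \<Rightarrow> nat \<Rightarrow> (nat \<Rightarrow> complex) \<Rightarrow> bool" where
  "gutkin_polygon n k v \<longleftrightarrow> (\<exists>\<alpha>. gutkin_with_angle n k v \<alpha>)"

end

theory Submission
  imports Defs
begin

definition ang :: "complex \<Rightarrow> complex \<Rightarrow> complex \<Rightarrow> real" where
  "ang p q r = Arg (cnj (p - q) * (r - q))"

lemma ang_pos: "cross (p - q) (r - q) > 0 \<Longrightarrow> 0 < ang p q r \<and> ang p q r < pi"
  by (simp add: ang_def Arg_lt_pi cross_def)

lemma Arg_add_pos:
  assumes "Im A > 0" "Im B > 0" "Im C > 0" "r > 0" "A * B = of_real r * C"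
  shows "Arg C = Arg A + Arg B"
proof -
  have nz: "A \<noteq> 0" "B \<noteq> 0" using assms by auto
  have "Arg (A * B) = Arg C" using assms(4,5) by simp
  moreover have "0 < Arg A" "Arg A < pi" "0 < Arg B" "Arg B < pi" "0 < Arg C"
    using assms Arg_lt_pi by blast+
  ultimately show ?thesis using Arg_times'[OF nz]
    by (smt (verit, ccfv_SIG) greaterThanAtMost_iff)
qed

lemma ang_add:
  assumes "cross (x - q) (y - q) > 0" "cross (y - q) (z - q) > 0" "cross (x - q) (z - q) > 0"
  shows "ang x q z = ang x q y + ang y q z"
  unfolding ang_def
proof (rule Arg_add_pos[where r = "(norm (y - q))^2"])
  show "Im (cnj (x - q) * (y - q)) > 0" "Im (cnj (y - q) * (z - q)) > 0" "Im (cnj (x - q) * (z - q)) > 0"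
    using assms by (auto simp: cross_def)
  then show "(norm (y - q))^2 > 0" by auto
  show "cnj (x - q) * (y - q) * (cnj (y - q) * (z - q)) = of_real ((norm (y - q))^2) * (cnj (x - q) * (z - q))"
    unfolding complex_norm_square by (simp add: algebra_simps)
qed

lemma ang_tri:
  assumes "cross (q - p) (r - p) > 0"
  shows "ang q p r + ang r q p + ang p r q = pi"
proof -
  define A where "A = cnj (q - p) * (r - p)"
  define B where "B = cnj (r - q) * (p - q)"
  define C where "C = cnj (p - r) * (q - r)"
  have i: "Im A > 0" "Im B > 0" "Im C > 0" using assms
    by (auto simp: A_def B_def C_def cross_def algebra_simps)
  have nz: "A \<noteq> 0" "B \<noteq> 0" "C \<noteq> 0" using i by auto
  have pq: "p \<noteq> q" "q \<noteq> r" "r \<noteq> p" using i by (auto simp: A_def B_def C_def)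
  define s where "s = (norm (q - p))^2 * (norm (r - q))^2 * (norm (p - r))^2"
  have s: "s > 0" using pq by (simp add: s_def)
  have prod: "A * B * C = - of_real s"
    unfolding A_def B_def C_def s_def of_real_mult complex_norm_square
    by (simp add: algebra_simps)
  have "Arg (A * B * C) = pi" unfolding prod using s by (simp add: Arg_eq_pi)
  moreover have "0 < Arg A" "Arg A < pi" "0 < Arg B" "Arg B < pi" "0 < Arg C" "Arg C < pi"
    using i Arg_lt_pi by blast+
  moreover have "A * B \<noteq> 0" using nz by simp
  ultimately have "Arg A + Arg B + Arg C = pi"
    using Arg_times'[OF nz(1) nz(2)] Arg_times'[OF \<open>A * B \<noteq> 0\<close> nz(3)]
    by (smt (verit, ccfv_SIG) greaterThanAtMost_iff)
  then show ?thesis by (simp add: ang_def A_def B_def C_def)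
qed

lemma angle_at_ang:
  assumes "cross (a - b) (c - b) > 0"
  shows "angle_at a b c = ang a b c"
proof -
  define w where "w = cnj (a - b) * (c - b)"
  have "Im w > 0" using assms by (simp add: w_def cross_def)
  then have w0: "w \<noteq> 0" and ar: "0 < Arg w" "Arg w < pi" using Arg_lt_pi by auto
  have "(a - b) \<bullet> (c - b) = Re w" by (simp add: w_def inner_complex_def algebra_simps)
  moreover have "norm (a - b) * norm (c - b) = norm w" by (metis w_def norm_mult complex_mod_cnj)
  moreover have "Re w = norm w * cos (Arg w)"
    by (metis rcis_cmod_Arg Re_rcis)
  ultimately have "((a - b) \<bullet> (c - b)) / (norm (a - b) * norm (c - b)) = cos (Arg w)"
    using w0 by simp
  then show ?thesis unfolding angle_at_def ang_def w_def[symmetric]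
    using ar by (simp add: arccos_cos)
qed

lemma angle_at_sym: "angle_at a b c = angle_at c b a"
  by (simp add: angle_at_def inner_commute mult.commute)

lemma neqm: "(x::nat) \<noteq> y \<Longrightarrow> y < x + n \<Longrightarrow> x < y + n \<Longrightarrow> x mod n \<noteq> y mod n"
proof -
  assume h: "x \<noteq> y" "y < x + n" "x < y + n"
  { fix a b :: nat assume "a < b" "b < a + n" "a mod n = b mod n"
    then have "n dvd (b - a)" using mod_eq_dvd_iff_nat[of a b n] by simp
    with \<open>a < b\<close> \<open>b < a + n\<close> have False
      by (metis dvd_imp_le less_diff_conv2 add.commute less_imp_le not_less zero_less_diff) }
  with h show ?thesis by (metis linorder_neqE_nat)
qed

lemma cross_cyc: "cross (b - a) (c - a) = cross (c - b) (a - b)"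
  by (simp add: cross_def algebra_simps)

definition VV :: "nat \<Rightarrow> (nat \<Rightarrow> complex) \<Rightarrow> nat \<Rightarrow> complex" where
  "VV n v j = v (j mod n)"

definition beta :: "nat \<Rightarrow> (nat \<Rightarrow> complex) \<Rightarrow> nat \<Rightarrow> real" where
  "beta n v j = ang (VV n v (j + 1)) (VV n v j) (VV n v (j + n - 1))"

lemma VV_per: "VV n v (j + n) = VV n v j"
  by (simp add: VV_def)

lemma VV_per1: "1 \<le> j \<Longrightarrow> VV n v (j + n - 1) = VV n v (j - 1)"
  by (metis VV_per add.commute add_diff_assoc2)

lemma conv':
  assumes "convex_ccw_polygon n v" "q mod n \<noteq> p mod n" "q mod n \<noteq> (p + 1) mod n"
  shows "cross (VV n v (p + 1) - VV n v p) (VV n v q - VV n v p) > 0"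
proof -
  have n: "n \<ge> 3" and c: "\<And>i j. i<n \<Longrightarrow> j<n \<Longrightarrow> j \<noteq> i \<and> j \<noteq> (i + 1) mod n \<Longrightarrow>
        cross (v ((i + 1) mod n) - v i) (v j - v i) > 0"
    using assms(1) unfolding convex_ccw_polygon_def by auto
  have e: "(p mod n + 1) mod n = (p + 1) mod n" by (metis mod_add_left_eq)
  show ?thesis using c[of "p mod n" "q mod n"] n assms(2,3) unfolding VV_def e by simp
qed

lemma fan:
  assumes cv: "convex_ccw_polygon n v" and m2: "2 \<le> m"
  shows "m \<le> n - 1 \<Longrightarrow> ang (VV n v (i + 1)) (VV n v i) (VV n v (i + m))
     + (\<Sum>j\<in>{i+1..<i+m}. beta n v j)
     + ang (VV n v i) (VV n v (i + m)) (VV n v (i + m - 1)) = (real m - 1) * pi"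
  using m2
proof (induction m rule: nat_induct_at_least)
  case base
  have n: "n \<ge> 3" using cv unfolding convex_ccw_polygon_def by auto
  have c: "cross (VV n v (i + 1 + 1) - VV n v (i + 1)) (VV n v i - VV n v (i + 1)) > 0"
    by (rule conv'[OF cv]) (rule neqm; use n in linarith)+
  have b: "beta n v (i + 1) = ang (VV n v (i + 2)) (VV n v (i + 1)) (VV n v i)"
    unfolding beta_def using VV_per[of n v i]
    by (simp add: add.commute add.left_commute)
  show ?case using ang_tri[OF c] b by (simp add: numeral_2_eq_2 algebra_simps)
next
  case (Suc m)
  have n: "n \<ge> 3" using cv unfolding convex_ccw_polygon_def by auto
  let ?V = "VV n v"
  have mm: "i + m - 1 + 1 = i + m" "i + Suc m - 1 = i + m" "i + m + 1 = i + Suc m"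
    using Suc by auto
  have c1: "cross (?V (i + m + 1) - ?V (i + m)) (?V i - ?V (i + m)) > 0"
    by (rule conv'[OF cv]) (rule neqm; use n Suc in linarith)+
  have c2: "cross (?V (i + m - 1 + 1) - ?V (i + m - 1)) (?V i - ?V (i + m - 1)) > 0"
    by (rule conv'[OF cv]) (rule neqm; use n Suc in linarith)+
  have c3: "cross (?V (i + m + 1) - ?V (i + m)) (?V (i + m - 1) - ?V (i + m)) > 0"
    by (rule conv'[OF cv]) (rule neqm; use n Suc in linarith)+
  have c4: "cross (?V (i + 1) - ?V i) (?V (i + m) - ?V i) > 0"
    by (rule conv'[OF cv]) (rule neqm; use n Suc in linarith)+
  have c5: "cross (?V (i + 1) - ?V i) (?V (i + m + 1) - ?V i) > 0"
    by (rule conv'[OF cv]) (rule neqm; use n Suc in linarith)+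
  have c2': "cross (?V i - ?V (i + m)) (?V (i + m - 1) - ?V (i + m)) > 0"
    using c2 cross_cyc[where a="?V (i + m - 1)" and b="?V (i + m)" and c="?V i"] mm(1) by simp
  have bsplit: "beta n v (i + m) = ang (?V (i + m + 1)) (?V (i + m)) (?V i)
       + ang (?V i) (?V (i + m)) (?V (i + m - 1))"
  proof -
    have "beta n v (i + m) = ang (?V (i + m + 1)) (?V (i + m)) (?V (i + m - 1))"
      unfolding beta_def using VV_per1[of "i + m" n v] Suc by simp
    also have "\<dots> = ang (?V (i + m + 1)) (?V (i + m)) (?V i)
       + ang (?V i) (?V (i + m)) (?V (i + m - 1))"
      by (rule ang_add) (use c1 c3 c2' in auto)
    finally show ?thesis .
  qed
  have tri: "ang (?V (i + m + 1)) (?V (i + m)) (?V i) + ang (?V i) (?V (i + m + 1)) (?V (i + m))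
      + ang (?V (i + m)) (?V i) (?V (i + m + 1)) = pi"
    by (rule ang_tri[OF c1])
  have c1': "cross (?V (i + m) - ?V i) (?V (i + m + 1) - ?V i) > 0"
    using c1 cross_cyc[where a="?V i" and b="?V (i + m)" and c="?V (i + m + 1)"] by simp
  have add: "ang (?V (i + 1)) (?V i) (?V (i + m + 1)) = ang (?V (i + 1)) (?V i) (?V (i + m))
      + ang (?V (i + m)) (?V i) (?V (i + m + 1))"
    by (rule ang_add) (use c4 c1' c5 in auto)
  have IH: "ang (?V (i + 1)) (?V i) (?V (i + m)) + (\<Sum>j\<in>{i+1..<i+m}. beta n v j)
     + ang (?V i) (?V (i + m)) (?V (i + m - 1)) = (real m - 1) * pi"
    using Suc by simp
  have s: "(\<Sum>j\<in>{i+1..<i+Suc m}. beta n v j) = (\<Sum>j\<in>{i+1..<i+m}. beta n v j) + beta n v (i + m)"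
    using Suc by simp
  show ?case unfolding s using IH tri add bsplit mm
    by (simp add: algebra_simps)
qed

lemma total:
  assumes cv: "convex_ccw_polygon n v"
  shows "(\<Sum>j\<in>{t..<t+n}. beta n v j) = (real n - 2) * pi"
proof -
  have n: "n \<ge> 3" using cv unfolding convex_ccw_polygon_def by auto
  let ?V = "VV n v"
  have f: "ang (?V (t + 1)) (?V t) (?V (t + (n - 1))) + (\<Sum>j\<in>{t+1..<t+(n-1)}. beta n v j)
     + ang (?V t) (?V (t + (n - 1))) (?V (t + (n - 1) - 1)) = (real (n - 1) - 1) * pi"
    by (rule fan[OF cv]) (use n in auto)
  have b1: "beta n v t = ang (?V (t + 1)) (?V t) (?V (t + (n - 1)))"
    unfolding beta_def using n by (simp add: add.commute)
  have b2: "beta n v (t + (n - 1)) = ang (?V t) (?V (t + (n - 1))) (?V (t + (n - 1) - 1))"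
  proof -
    have "t + (n - 1) + 1 = t + n" using n by simp
    moreover have "t + (n - 1) + n - 1 = (t + (n - 1) - 1) + n" using n by simp
    ultimately show ?thesis unfolding beta_def by (simp only: VV_per)
  qed
  have s1: "(\<Sum>j\<in>{t..<t+n}. beta n v j) = beta n v t + (\<Sum>j\<in>{t+1..<t+n}. beta n v j)"
    using n by (simp add: sum.atLeast_Suc_lessThan)
  have s2: "(\<Sum>j\<in>{t+1..<t+n}. beta n v j) = (\<Sum>j\<in>{t+1..<t+(n-1)}. beta n v j) + beta n v (t + (n - 1))"
  proof -
    have e: "t + n = Suc (t + (n - 1))" using n by simp
    have "t + 1 \<le> t + (n - 1)" using n by simp
    then show ?thesis unfolding e by (rule sum.atLeastLessThan_Suc)
  qed
  show ?thesis using f b1 b2 s1 s2 n by (simp add: of_nat_diff algebra_simps)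
qed

theorem mainTheorem8:
  fixes n k :: nat and v :: "nat \<Rightarrow> complex" and \<alpha> :: real
  assumes "2 \<le> k" and "2 * k \<le> n"
    and "gutkin_with_angle n k v \<alpha>"
  shows "\<alpha> = pi * (real k - 1) / real n"
proof -
  have cv: "convex_ccw_polygon n v" and g: "\<And>i. i < n \<Longrightarrow>
     angle_at (v ((i + 1) mod n)) (v i) (v ((i + k) mod n)) = \<alpha> \<and>
     angle_at (v ((i + k - 1) mod n)) (v ((i + k) mod n)) (v i) = \<alpha>"
    using assms(3) unfolding gutkin_with_angle_def by auto
  have n: "n \<ge> 3" using cv unfolding convex_ccw_polygon_def by auto
  let ?V = "VV n v"
  have each: "2 * \<alpha> + (\<Sum>j\<in>{i+1..<i+k}. beta n v j) = (real k - 1) * pi" if i: "i < n" for i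
  proof -
    have f: "ang (?V (i + 1)) (?V i) (?V (i + k)) + (\<Sum>j\<in>{i+1..<i+k}. beta n v j)
     + ang (?V i) (?V (i + k)) (?V (i + k - 1)) = (real k - 1) * pi"
      by (rule fan[OF cv]) (use assms in auto)
    have vi: "?V i = v i" using i by (simp add: VV_def)
    have c1: "cross (?V (i + 1) - ?V i) (?V (i + k) - ?V i) > 0"
      by (rule conv'[OF cv]) (rule neqm; use assms in linarith)+
    have c2: "cross (?V (i + k - 1 + 1) - ?V (i + k - 1)) (?V i - ?V (i + k - 1)) > 0"
      by (rule conv'[OF cv]) (rule neqm; use assms in linarith)+
    have kk: "i + k - 1 + 1 = i + k" using assms by simp
    have c2': "cross (?V i - ?V (i + k)) (?V (i + k - 1) - ?V (i + k)) > 0"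
      using c2 cross_cyc[where a="?V (i + k - 1)" and b="?V (i + k)" and c="?V i"] kk by simp
    have a1: "ang (?V (i + 1)) (?V i) (?V (i + k)) = \<alpha>"
      using angle_at_ang[OF c1] g[OF i] vi by (simp add: VV_def)
    have a2: "ang (?V i) (?V (i + k)) (?V (i + k - 1)) = \<alpha>"
      using angle_at_ang[OF c2'] g[OF i] vi angle_at_sym by (simp add: VV_def)
    show ?thesis using f a1 a2 by simp
  qed
  have "(\<Sum>i<n. 2 * \<alpha> + (\<Sum>j\<in>{i+1..<i+k}. beta n v j)) = (\<Sum>i<n. (real k - 1) * pi)"
    using each by simp
  moreover have "(\<Sum>i<n. (\<Sum>j\<in>{i+1..<i+k}. beta n v j)) = (real k - 1) * ((real n - 2) * pi)"
  proof -
    have "(\<Sum>i<n. (\<Sum>j\<in>{i+1..<i+k}. beta n v j)) = (\<Sum>i<n. (\<Sum>t\<in>{1..<k}. beta n v (t + i)))"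
    proof (rule sum.cong[OF refl])
      fix i show "(\<Sum>j\<in>{i+1..<i+k}. beta n v j) = (\<Sum>t\<in>{1..<k}. beta n v (t + i))"
        using sum.shift_bounds_nat_ivl[of "beta n v" 1 i k] by (simp add: add.commute)
    qed
    also have "\<dots> = (\<Sum>t\<in>{1..<k}. (\<Sum>i<n. beta n v (t + i)))"
      by (rule sum.swap)
    also have "\<dots> = (\<Sum>t\<in>{1..<k}. (real n - 2) * pi)"
    proof (rule sum.cong[OF refl])
      fix t
      have "(\<Sum>i<n. beta n v (t + i)) = (\<Sum>j\<in>{t..<t+n}. beta n v j)"
        using sum.shift_bounds_nat_ivl[of "beta n v" 0 t n] by (simp add: add.commute lessThan_atLeast0)
      then show "(\<Sum>i<n. beta n v (t + i)) = (real n - 2) * pi" using total[OF cv] by simp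
    qed
    finally show ?thesis using assms by (simp add: of_nat_diff)
  qed
  ultimately have "real n * (2 * \<alpha>) + (real k - 1) * ((real n - 2) * pi) = real n * ((real k - 1) * pi)"
    by (simp add: sum.distrib)
  then have "real n * \<alpha> = (real k - 1) * pi" by (simp add: algebra_simps)
  then show ?thesis using n by (simp add: field_simps)
qed
end
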